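(* Let $(f_0, M_0, \Lambda_0, \mathcal{Q}_0)$ be a SIMDG with induced set $\mathcal{P}_0$ and training distribution $P_{\mathrm{tr}}$, let $\mathcal{F}$ be a class of measurable functions $\mathbb{R}^p\to\mathbb{R}$, let $\mathcal{I}_0$ be the set of invariant functions in $\mathcal{F}$, and let $f_\star\in\mathcal{I}_0$ be the BCF, as in the context. Suppose that (i) for all $f,g\in\mathcal{F}$ and all $P\in\mathcal{P}_0$, $f(X)=g(X)$ $P_{\mathrm{tr}}$-a.s. implies $f(X)=g(X)$ $P$-a.s.; and (ii) $\inf_{P\in\mathcal{P}_0}\mathrm{E}_P\big[(\mathrm{E}_P[\gamma_0(V)\mid R^\top X]-\mathrm{E}_P[\gamma_0(V)\mid X])^2\big]=0$. Then, with $\mathcal{R}(P,f):=\mathrm{E}_P[(Y-f(X))^2]$, $$\mathcal{R}(P_{\mathrm{tr}},f_\star)=\inf_{f\in\mathcal{I}_0}\mathcal{R}(P_{\mathrm{tr}},f).$$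
   Context: Fix integers $p,r\ge 1$. A SIMDG is a tuple $(f_0, M_0, \Lambda_0, \mathcal{Q}_0)$ where $f_0:\mathbb{R}^p\to\mathbb{R}$ is measurable, $M_0\in\mathbb{R}^{p\times r}$, $\Lambda_0$ is a distribution on $\mathbb{R}^{1+p}$ such that $(U,V)\sim\Lambda_0$ satisfies $\mathrm{E}[(U,V)]=0$ and $\mathrm{E}[\|(U,V)\|_2^2]<\infty$, and $\mathcal{Q}_0$ is a set of distributions on $\mathbb{R}^r$. For each $Q\in\mathcal{Q}_0$ the model induces a distribution $P$ of $(U,V,X,Y,Z)$ by drawing $((U,V),Z)\sim\Lambda_0\otimes Q$ and setting $X = M_0 Z + V$, $Y = f_0(X)+U$; $\mathcal{P}_0$ is the set of all such induced distributions. Standing setting: $\sup_{P\in\mathcal{P}_0}\mathrm{E}_P[f_0(X)]^2<\infty$; $Q_{\mathrm{tr}}\in\mathcal{Q}_0$ satisfies $\mathrm{E}_{Q_{\mathrm{tr}}}[Z]=0$ and $\mathrm{E}_{Q_{\mathrm{tr}}}[ZZ^\top]\succ 0$; $P_{\mathrm{tr}}$ is the distribution induced by $Q_{\mathrm{tr}}$. A function $f\in\mathcal{F}$ is invariant if the distribution of $Y-f(X)$ under $P_{\mathrm{tr}}$ equals its distribution under $P$ for every $P\in\mathcal{P}_0$; $\mathcal{I}_0$ is the set of invariant $f\in\mathcal{F}$. Let $q=\mathrm{rank}(M_0)$; if $q<p$, $R\in\mathbb{R}^{p\times(p-q)}$ has columns forming an orthonormal basis of $\ker(M_0^\top)$,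 and if $q=p$, $R$ is the zero vector in $\mathbb{R}^{p\times 1}$. $\gamma_0(v):=\mathrm{E}_{P_{\mathrm{tr}}}[U\mid V=v]$. The BCF is $f_\star(x):=f_0(x)+\mathrm{E}_{P_{\mathrm{tr}}}[\gamma_0(V)\mid R^\top X = R^\top x]$, defined for $P_{\mathrm{tr}}$-a.e. $x$. *)

theory Defs
  imports "HOL-Analysis.Analysis" "HOL-Probability.Probability"
begin

type_synonym ('p,'r) obs = "real \<times> (real^'p) \<times> (real^'p) \<times> real \<times> (real^'r)"

definition obsU :: "('p::finite,'r::finite) obs \<Rightarrow> real" where "obsU w = fst w"
definition obsV :: "('p::finite,'r::finite) obs \<Rightarrow> real^'p" where "obsV w = fst (snd w)"
definition obsX :: "('p::finite,'r::finite) obs \<Rightarrow> real^'p" where "obsX w = fst (snd (snd w))"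
definition obsY :: "('p::finite,'r::finite) obs \<Rightarrow> real" where "obsY w = fst (snd (snd (snd w)))"
definition obsZ :: "('p::finite,'r::finite) obs \<Rightarrow> real^'r" where "obsZ w = snd (snd (snd (snd w)))"

definition simdg_law ::
  "(real^'p \<Rightarrow> real) \<Rightarrow> real^'r^'p \<Rightarrow> (real \<times> (real^'p)) measure \<Rightarrow> (real^'r) measure
     \<Rightarrow> ('p::finite,'r::finite) obs measure" where
  "simdg_law f0 M0 Lam Q =
     distr (Lam \<Otimes>\<^sub>M Q) borel
       (\<lambda>((u,v),z). (u, v, M0 *v z + v, f0 (M0 *v z + v) + u, z))"

definition invariant_fun ::
  "('p::finite,'r::finite) obs measure \<Rightarrow> ('p,'r) obs measure set \<Rightarrow> (real^'p \<Rightarrow> real) \<Rightarrow> bool" where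
  "invariant_fun Ptr P0 f \<longleftrightarrow>
     (\<forall>P\<in>P0. distr Ptr borel (\<lambda>w. obsY w - f (obsX w)) = distr P borel (\<lambda>w. obsY w - f (obsX w)))"

definition risk :: "('p::finite,'r::finite) obs measure \<Rightarrow> (real^'p \<Rightarrow> real) \<Rightarrow> ennreal" where
  "risk P f = (\<integral>\<^sup>+ w. ennreal ((obsY w - f (obsX w))\<^sup>2) \<partial>P)"

definition cond_exp_given ::
  "'a measure \<Rightarrow> ('a \<Rightarrow> 'b::topological_space) \<Rightarrow> ('a \<Rightarrow> real) \<Rightarrow> 'a \<Rightarrow> real" where
  "cond_exp_given P T g = real_cond_exp P (vimage_algebra (space P) T borel) g"

end

theory Submission
  imports Defs
begin

lemma cont_borel: "continuous_on UNIV f \<Longrightarrow> f \<in> borel_measurable borel"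
  by (rule borel_measurable_continuous_onI)

lemma obs_meas[measurable]:
  "obsU \<in> borel_measurable borel" "obsV \<in> borel_measurable borel" "obsX \<in> borel_measurable borel"
  "obsY \<in> borel_measurable borel" "obsZ \<in> borel_measurable borel"
  unfolding obsU_def[abs_def] obsV_def[abs_def] obsX_def[abs_def] obsY_def[abs_def] obsZ_def[abs_def]
  by (auto intro!: cont_borel continuous_intros)

lemma sets_LQ:
  assumes "sets Lam = sets (borel :: ('a::second_countable_topology) measure)" "sets Q = sets (borel :: ('b::second_countable_topology) measure)"
  shows "sets (Lam \<Otimes>\<^sub>M Q) = sets (borel :: ('a \<times> 'b) measure)"
  by (metis assms borel_prod sets_pair_measure_cong)

lemma mat_meas[measurable]: "(\<lambda>z. (M0::real^'n::finite^'m::finite) *v z) \<in> borel_measurable borel"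
  by (intro cont_borel linear_continuous_on matrix_vector_mul_bounded_linear)

lemma law_map_meas[measurable]:
  fixes f0 :: "real^'p::finite \<Rightarrow> real" and M0 :: "real^'r::finite^'p"
  assumes [measurable]: "f0 \<in> borel_measurable borel"
  shows "(\<lambda>((u,v),z). (u, v, M0 *v z + v, f0 (M0 *v z + v) + u, z)) \<in> measurable (borel :: ((real \<times> (real^'p)) \<times> (real^'r)) measure) (borel :: ('p,'r) obs measure)"
proof -
  have [measurable]: "(\<lambda>x::((real \<times> (real^'p)) \<times> (real^'r)). fst (fst x)) \<in> borel_measurable borel"
    "(\<lambda>x::((real \<times> (real^'p)) \<times> (real^'r)). snd (fst x)) \<in> borel_measurable borel"
    "(\<lambda>x::((real \<times> (real^'p)) \<times> (real^'r)). snd x) \<in> borel_measurable borel"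
    by (auto intro!: cont_borel continuous_intros)
  have e: "(\<lambda>((u,v),z). (u, v, M0 *v z + v, f0 (M0 *v z + v) + u, z)) = 
     (\<lambda>x::((real \<times> (real^'p)) \<times> (real^'r)). (fst (fst x), snd (fst x), M0 *v snd x + snd (fst x),
        f0 (M0 *v snd x + snd (fst x)) + fst (fst x), snd x))"
    by (auto simp: fun_eq_iff split: prod.splits)
  show ?thesis unfolding e by measurable
qed

locale simdg =
  fixes f0 :: "real^'p::finite \<Rightarrow> real" and M0 :: "real^'r::finite^'p"
    and Lam :: "(real \<times> (real^'p)) measure"
  assumes f0_meas[measurable]: "f0 \<in> borel_measurable borel"
    and Lam_prob: "prob_space Lam" and Lam_sets: "sets Lam = sets borel"
begin

definition mp :: "(real \<times> (real^'p)) \<times> (real^'r) \<Rightarrow> ('p,'r) obs" where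
  "mp = (\<lambda>((u,v),z). (u, v, M0 *v z + v, f0 (M0 *v z + v) + u, z))"

lemma mp_simp[simp]: "mp ((u,v),z) = (u, v, M0 *v z + v, f0 (M0 *v z + v) + u, z)"
  by (simp add: mp_def)

lemma law_eq: "simdg_law f0 M0 Lam Q = distr (Lam \<Otimes>\<^sub>M Q) borel mp"
  unfolding simdg_law_def mp_def ..

context
  fixes Q :: "(real^'r) measure"
  assumes Q_prob: "prob_space Q" and Q_sets: "sets Q = sets borel"
begin

lemma LQ_sets: "sets (Lam \<Otimes>\<^sub>M Q) = sets borel"
  using sets_LQ[OF Lam_sets Q_sets] .

lemma mp_meas: "mp \<in> measurable (Lam \<Otimes>\<^sub>M Q) borel"
  unfolding measurable_cong_sets[OF LQ_sets refl] mp_def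
  by (rule law_map_meas[OF f0_meas])

lemma LQ_prob: "prob_space (Lam \<Otimes>\<^sub>M Q)"
  by (intro prob_space_pair Lam_prob Q_prob)

lemma law_prob: "prob_space (simdg_law f0 M0 Lam Q)"
  unfolding law_eq by (intro prob_space.prob_space_distr LQ_prob mp_meas)

lemma law_sets: "sets (simdg_law f0 M0 Lam Q) = sets borel"
  unfolding law_eq by simp

lemma law_space: "space (simdg_law f0 M0 Lam Q) = UNIV"
  unfolding law_eq by simp

lemma distr_fst: "distr (Lam \<Otimes>\<^sub>M Q) Lam fst = Lam"
  using prob_space.distr_pair_fst[OF Q_prob] .

lemma law_UV_integral:
  fixes \<psi> :: "('p,'r) obs \<Rightarrow> real" and \<phi> :: "real \<times> (real^'p) \<Rightarrow> real"
  assumes [measurable]: "\<psi> \<in> borel_measurable borel" "\<phi> \<in> borel_measurable borel"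
    and eq: "\<And>u v z. \<psi> (mp ((u,v),z)) = \<phi> (u,v)"
  shows "integral\<^sup>L (simdg_law f0 M0 Lam Q) \<psi> = integral\<^sup>L Lam \<phi>"
    "integrable (simdg_law f0 M0 Lam Q) \<psi> \<longleftrightarrow> integrable Lam \<phi>"
proof -
  have phL: "\<phi> \<in> borel_measurable Lam" unfolding measurable_cong_sets[OF Lam_sets refl] using assms(2) by simp
  have fm: "fst \<in> measurable (Lam \<Otimes>\<^sub>M Q) Lam" by simp
  have e: "(\<lambda>x. \<psi> (mp x)) = (\<lambda>x. \<phi> (fst x))" using eq by (auto simp: fun_eq_iff)
  show "integral\<^sup>L (simdg_law f0 M0 Lam Q) \<psi> = integral\<^sup>L Lam \<phi>"
    unfolding law_eq integral_distr[OF mp_meas assms(1)] e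
    using integral_distr[OF fm phL] distr_fst by simp
  show "integrable (simdg_law f0 M0 Lam Q) \<psi> \<longleftrightarrow> integrable Lam \<phi>"
    unfolding law_eq integrable_distr_eq[OF mp_meas assms(1)] e
    using integrable_distr_eq[OF fm phL] distr_fst by simp
qed

lemma law_UV_nn_integral:
  fixes \<psi> :: "('p,'r) obs \<Rightarrow> ennreal" and \<phi> :: "real \<times> (real^'p) \<Rightarrow> ennreal"
  assumes [measurable]: "\<psi> \<in> borel_measurable borel" "\<phi> \<in> borel_measurable borel"
    and eq: "\<And>u v z. \<psi> (mp ((u,v),z)) = \<phi> (u,v)"
  shows "integral\<^sup>N (simdg_law f0 M0 Lam Q) \<psi> = integral\<^sup>N Lam \<phi>"
proof -
  have phL: "\<phi> \<in> borel_measurable (distr (Lam \<Otimes>\<^sub>M Q) Lam fst)" unfolding measurable_distr_eq1 unfolding measurable_cong_sets[OF Lam_sets refl] using assms(2) by simp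
  have fm: "fst \<in> measurable (Lam \<Otimes>\<^sub>M Q) Lam" by simp
  have e: "(\<lambda>x. \<psi> (mp x)) = (\<lambda>x. \<phi> (fst x))" using eq by (auto simp: fun_eq_iff)
  show ?thesis
  proof -
    have "integral\<^sup>N (distr (Lam \<Otimes>\<^sub>M Q) borel mp) \<psi> = (\<integral>\<^sup>+ x. \<psi> (mp x) \<partial>(Lam \<Otimes>\<^sub>M Q))"
      by (rule nn_integral_distr[OF mp_meas]) simp
    then show ?thesis unfolding law_eq
      using nn_integral_distr[OF fm phL] distr_fst e by simp
  qed
qed

end
end

lemma sq_integrable_iff:
  fixes f :: "'a \<Rightarrow> real"
  assumes "f \<in> borel_measurable M"
  shows "integrable M (\<lambda>x. (f x)\<^sup>2) \<longleftrightarrow> (\<integral>\<^sup>+x. ennreal ((f x)\<^sup>2) \<partial>M) < \<infinity>"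
  using assms by (simp add: integrable_iff_bounded)

lemma sq_integrable_diff:
  fixes f g :: "'a \<Rightarrow> real"
  assumes [measurable]: "f \<in> borel_measurable M" "g \<in> borel_measurable M"
    and "integrable M (\<lambda>x. (f x)\<^sup>2)" "integrable M (\<lambda>x. (g x)\<^sup>2)"
  shows "integrable M (\<lambda>x. (f x - g x)\<^sup>2)" "integrable M (\<lambda>x. f x * g x)"
proof -
  have i: "integrable M (\<lambda>x. 2 * (f x)\<^sup>2 + 2 * (g x)\<^sup>2)" using assms(3,4) by simp
  show "integrable M (\<lambda>x. (f x - g x)\<^sup>2)"
  proof (rule Bochner_Integration.integrable_bound[OF i])
    show "AE x in M. norm ((f x - g x)\<^sup>2) \<le> norm (2 * (f x)\<^sup>2 + 2 * (g x)\<^sup>2)"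
    proof (rule AE_I2)
      fix x
      have "0 \<le> (f x + g x)\<^sup>2" by simp
      then have "(f x - g x)\<^sup>2 \<le> 2 * (f x)\<^sup>2 + 2 * (g x)\<^sup>2"
        by (simp add: power2_eq_square algebra_simps)
      then show "norm ((f x - g x)\<^sup>2) \<le> norm (2 * (f x)\<^sup>2 + 2 * (g x)\<^sup>2)"
        by simp
    qed
  qed simp
  show "integrable M (\<lambda>x. f x * g x)"
  proof (rule Bochner_Integration.integrable_bound[OF i])
    show "AE x in M. norm (f x * g x) \<le> norm (2 * (f x)\<^sup>2 + 2 * (g x)\<^sup>2)"
    proof (rule AE_I2)
      fix x
      have "0 \<le> (f x + g x)\<^sup>2" "0 \<le> (f x - g x)\<^sup>2" by simp_all
      then show "norm (f x * g x) \<le> norm (2 * (f x)\<^sup>2 + 2 * (g x)\<^sup>2)"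
        by (simp add: power2_eq_square algebra_simps abs_le_iff)
    qed
  qed simp
qed

lemma cond_exp_sq_integrable:
  assumes "prob_space M" "sigma_finite_subalgebra M F"
    and [measurable]: "U \<in> borel_measurable M" and U2: "integrable M (\<lambda>x. (U x)\<^sup>2)"
  shows "integrable M (\<lambda>x. (real_cond_exp M F U x)\<^sup>2)"
proof -
  interpret prob_space M by fact
  interpret sigma_finite_subalgebra M F by fact
  have U1: "integrable M U" by (rule square_integrable_imp_integrable) (simp_all add: U2)
  have J: "AE x in M. (real_cond_exp M F U x)\<^sup>2 \<le> real_cond_exp M F (\<lambda>x. (U x)\<^sup>2) x"
    using real_cond_exp_jensens_inequality(2)[OF U1, of UNIV 0 0 power2] U2 convex_power2 by auto
  have cm: "real_cond_exp M F U \<in> borel_measurable M"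
    using measurable_from_subalg[OF subalg] by auto
  show ?thesis
  proof (rule Bochner_Integration.integrable_bound[OF real_cond_exp_int(1)[OF U2]])
    show "(\<lambda>x. (real_cond_exp M F U x)\<^sup>2) \<in> borel_measurable M" using cm by measurable
    show "AE x in M. norm ((real_cond_exp M F U x)\<^sup>2) \<le> norm (real_cond_exp M F (\<lambda>x. (U x)\<^sup>2) x)"
      using J by eventually_elim auto
  qed
qed

lemma cond_pyth:
  assumes "prob_space M" "sigma_finite_subalgebra M F"
    and [measurable]: "U \<in> borel_measurable M" and U2: "integrable M (\<lambda>x. (U x)\<^sup>2)"
    and kF: "k \<in> borel_measurable F"
  shows "(\<integral>\<^sup>+x. ennreal ((U x - k x)\<^sup>2) \<partial>M) =
     (\<integral>\<^sup>+x. ennreal ((U x - real_cond_exp M F U x)\<^sup>2) \<partial>M) + (\<integral>\<^sup>+x. ennreal ((real_cond_exp M F U x - k x)\<^sup>2) \<partial>M)"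
proof -
  interpret prob_space M by fact
  interpret sigma_finite_subalgebra M F by fact
  define c where "c = real_cond_exp M F U"
  have cF: "c \<in> borel_measurable F" unfolding c_def by simp
  have [measurable]: "c \<in> borel_measurable M" "k \<in> borel_measurable M"
    using measurable_from_subalg[OF subalg] cF kF by auto
  have c2: "integrable M (\<lambda>x. (c x)\<^sup>2)" unfolding c_def by (rule cond_exp_sq_integrable) (simp_all add: assms)
  have Uc2: "integrable M (\<lambda>x. (U x - c x)\<^sup>2)" by (rule sq_integrable_diff) (simp_all add: c2 U2)
  show ?thesis unfolding c_def[symmetric]
  proof (cases "integrable M (\<lambda>x. (c x - k x)\<^sup>2)")
    case True
    have Uk2: "integrable M (\<lambda>x. (U x - k x)\<^sup>2)"
      using sq_integrable_diff(1)[of "\<lambda>x. U x - c x" M "\<lambda>x. k x - c x"] Uc2 True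
      by (simp add: power2_commute)
    have X: "integrable M (\<lambda>x. (U x - c x) * (c x - k x))"
      by (rule sq_integrable_diff(2)) (simp_all add: Uc2 True)
    have ck: "(\<lambda>x. c x - k x) \<in> borel_measurable F" using cF kF by measurable
    have X1: "integrable M (\<lambda>x. (c x - k x) * U x)"
      by (rule sq_integrable_diff(2)) (simp_all add: U2 True)
    have I: "(\<integral>x. (c x - k x) * c x \<partial>M) = (\<integral>x. (c x - k x) * U x \<partial>M)"
      using real_cond_exp_intg(2)[OF X1 ck] unfolding c_def by simp
    have X2: "integrable M (\<lambda>x. (c x - k x) * c x)"
      by (rule sq_integrable_diff(2)) (simp_all add: c2 True)
    have cross: "(\<integral>x. (U x - c x) * (c x - k x) \<partial>M) = 0"
    proof -
      have "(\<integral>x. (U x - c x) * (c x - k x) \<partial>M) = (\<integral>x. (c x - k x) * U x - (c x - k x) * c x \<partial>M)"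
        by (rule Bochner_Integration.integral_cong) (simp_all add: algebra_simps)
      also have "\<dots> = 0" using I X1 X2 by simp
      finally show ?thesis .
    qed
    have "(\<integral>x. (U x - k x)\<^sup>2 \<partial>M) = (\<integral>x. (U x - c x)\<^sup>2 + (c x - k x)\<^sup>2 + 2 * ((U x - c x) * (c x - k x)) \<partial>M)"
      by (rule Bochner_Integration.integral_cong) (simp_all add: power2_eq_square algebra_simps)
    also have "\<dots> = (\<integral>x. (U x - c x)\<^sup>2 \<partial>M) + (\<integral>x. (c x - k x)\<^sup>2 \<partial>M)"
      using Uc2 True X cross by simp
    finally have eq: "(\<integral>x. (U x - k x)\<^sup>2 \<partial>M) = (\<integral>x. (U x - c x)\<^sup>2 \<partial>M) + (\<integral>x. (c x - k x)\<^sup>2 \<partial>M)" .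
    show "(\<integral>\<^sup>+x. ennreal ((U x - k x)\<^sup>2) \<partial>M) =
     (\<integral>\<^sup>+x. ennreal ((U x - c x)\<^sup>2) \<partial>M) + (\<integral>\<^sup>+x. ennreal ((c x - k x)\<^sup>2) \<partial>M)"
      by (simp add: nn_integral_eq_integral Uk2 Uc2 True eq integral_nonneg_AE ennreal_plus[symmetric] del: ennreal_plus)
  next
    case False
    have inf1: "(\<integral>\<^sup>+x. ennreal ((c x - k x)\<^sup>2) \<partial>M) = \<infinity>"
      proof -
      have "(\<lambda>x. c x - k x) \<in> borel_measurable M" by measurable
      then show ?thesis using False sq_integrable_iff[of "\<lambda>x. c x - k x" M] by (auto simp: less_top[symmetric])
    qed
    have "\<not> integrable M (\<lambda>x. (U x - k x)\<^sup>2)"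
    proof
      assume "integrable M (\<lambda>x. (U x - k x)\<^sup>2)"
      then have "integrable M (\<lambda>x. ((U x - k x) - (U x - c x))\<^sup>2)"
      proof -
        have m1: "(\<lambda>x. U x - k x) \<in> borel_measurable M" "(\<lambda>x. U x - c x) \<in> borel_measurable M" by measurable
        show ?thesis using sq_integrable_diff(1)[OF m1 \<open>integrable M (\<lambda>x. (U x - k x)\<^sup>2)\<close> Uc2] by simp
      qed
      then show False using False by simp
    qed
    have inf2: "(\<integral>\<^sup>+x. ennreal ((U x - k x)\<^sup>2) \<partial>M) = \<infinity>"
      proof -
      have "(\<lambda>x. U x - k x) \<in> borel_measurable M" by measurable
      then show ?thesis using \<open>\<not> integrable M (\<lambda>x. (U x - k x)\<^sup>2)\<close> sq_integrable_iff[of "\<lambda>x. U x - k x" M] by (auto simp: less_top[symmetric])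
    qed
    show "(\<integral>\<^sup>+x. ennreal ((U x - k x)\<^sup>2) \<partial>M) =
     (\<integral>\<^sup>+x. ennreal ((U x - c x)\<^sup>2) \<partial>M) + (\<integral>\<^sup>+x. ennreal ((c x - k x)\<^sup>2) \<partial>M)"
      using inf1 inf2 by simp
  qed
qed

lemma sfs_vimage:
  assumes "prob_space M" "T \<in> measurable M N"
  shows "sigma_finite_subalgebra M (vimage_algebra (space M) T N)"
proof -
  interpret prob_space M by fact
  have sub: "subalgebra M (vimage_algebra (space M) T N)"
    unfolding subalgebra_def using sets_image_in_sets[OF refl assms(2)] by simp
  have "finite_measure_subalgebra M (vimage_algebra (space M) T N)"
    unfolding finite_measure_subalgebra_def finite_measure_subalgebra_axioms_def
    using sub finite_measure_axioms by simp
  then show ?thesis by (rule finite_measure_subalgebra_is_sigma_finite)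
qed

context simdg
begin

lemma law_AE:
  assumes Q_prob: "prob_space Q" and Q_sets: "sets Q = sets borel"
  shows "AE w in simdg_law f0 M0 Lam Q. obsY w = f0 (obsX w) + obsU w \<and> obsX w = M0 *v obsZ w + obsV w"
proof -
  have m1: "(\<lambda>w. obsY w - (f0 (obsX w) + obsU w)) \<in> borel_measurable (borel :: ('p,'r) obs measure)"
    by measurable
  have m2: "(\<lambda>w. obsX w - (M0 *v obsZ w + obsV w)) \<in> borel_measurable (borel :: ('p,'r) obs measure)"
    by measurable
  have s: "{w \<in> space borel. obsY w - (f0 (obsX w) + obsU w) = 0 \<and> obsX w - (M0 *v obsZ w + obsV w) = 0}
     = ((\<lambda>w. obsY w - (f0 (obsX w) + obsU w)) -` {0} \<inter> space borel) \<inter> ((\<lambda>w. obsX w - (M0 *v obsZ w + obsV w)) -` {0} \<inter> space borel)"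
    by auto
  have m: "{w \<in> space borel. obsY w - (f0 (obsX w) + obsU w) = 0 \<and> obsX w - (M0 *v obsZ w + obsV w) = 0} \<in> sets (borel :: ('p,'r) obs measure)"
    unfolding s by (intro sets.Int measurable_sets[OF m1] measurable_sets[OF m2]) simp_all
  have "AE w in simdg_law f0 M0 Lam Q. obsY w - (f0 (obsX w) + obsU w) = 0 \<and> obsX w - (M0 *v obsZ w + obsV w) = 0"
    unfolding law_eq AE_distr_iff[OF mp_meas[OF Q_prob Q_sets] m]
  proof (rule AE_I2)
    fix x :: "(real \<times> (real^'p)) \<times> (real^'r)"
    obtain u v z where x: "x = ((u,v),z)" by (metis prod.collapse)
    show "obsY (mp x) - (f0 (obsX (mp x)) + obsU (mp x)) = 0 \<and> obsX (mp x) - (M0 *v obsZ (mp x) + obsV (mp x)) = 0"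
      unfolding x mp_simp obsU_def obsV_def obsX_def obsY_def obsZ_def fst_conv snd_conv by simp
  qed
  then show ?thesis by (rule AE_mp) (rule AE_I2, simp)
qed

end

locale simdg_tr = simdg f0 M0 Lam
  for f0 :: "real^'p::finite \<Rightarrow> real" and M0 :: "real^'r::finite^'p"
    and Lam :: "(real \<times> (real^'p)) measure" +
  fixes Qtr :: "(real^'r) measure" and \<gamma>0 :: "real^'p \<Rightarrow> real"
  assumes Qtr_prob: "prob_space Qtr" and Qtr_sets: "sets Qtr = sets borel"
    and Lam_sq: "integrable Lam (\<lambda>w. (norm w)\<^sup>2)"
    and \<gamma>0_meas[measurable]: "\<gamma>0 \<in> borel_measurable borel"
    and \<gamma>0_def: "AE w in simdg_law f0 M0 Lam Qtr. \<gamma>0 (obsV w) = cond_exp_given (simdg_law f0 M0 Lam Qtr) obsV obsU w"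
begin

abbreviation "Ptr \<equiv> simdg_law f0 M0 Lam Qtr"

lemma Lam_u2: "integrable Lam (\<lambda>(u,v). u\<^sup>2)"
proof (rule Bochner_Integration.integrable_bound[OF Lam_sq])
  show "(\<lambda>(u,v). u\<^sup>2) \<in> borel_measurable Lam"
    unfolding measurable_cong_sets[OF Lam_sets refl] case_prod_beta' by (intro cont_borel continuous_intros)
  show "AE x in Lam. norm (case x of (u, v) \<Rightarrow> u\<^sup>2) \<le> norm ((norm x)\<^sup>2)"
  proof (rule AE_I2)
    fix x :: "real \<times> (real^'p)"
    have "\<bar>fst x\<bar> \<le> norm x" using norm_fst_le[of "fst x" "snd x"] by simp
    then have "(fst x)\<^sup>2 \<le> (norm x)\<^sup>2" by (metis abs_ge_zero power2_abs power_mono)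
    then show "norm (case x of (u, v) \<Rightarrow> u\<^sup>2) \<le> norm ((norm x)\<^sup>2)" by (simp add: case_prod_beta')
  qed
qed

lemma law_U2:
  assumes Q_prob: "prob_space Q" and Q_sets: "sets Q = sets borel"
  shows "integrable (simdg_law f0 M0 Lam Q) (\<lambda>w. (obsU w)\<^sup>2)" "integrable (simdg_law f0 M0 Lam Q) obsU"
proof -
  have m: "(\<lambda>(u::real,v::real^'p). u\<^sup>2) \<in> borel_measurable borel"
    unfolding case_prod_beta' by (intro cont_borel continuous_intros)
  have m2: "(\<lambda>w. (obsU w)\<^sup>2) \<in> borel_measurable (borel :: ('p,'r) obs measure)" by measurable
  have "integrable (simdg_law f0 M0 Lam Q) (\<lambda>w. (obsU w)\<^sup>2) \<longleftrightarrow> integrable Lam (\<lambda>(u,v). u\<^sup>2)"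
    by (rule law_UV_integral(2)[OF Q_prob Q_sets m2 m]) (simp add: obsU_def)
  then show 1: "integrable (simdg_law f0 M0 Lam Q) (\<lambda>w. (obsU w)\<^sup>2)" using Lam_u2 by simp
  interpret prob_space "simdg_law f0 M0 Lam Q" by (rule law_prob[OF Q_prob Q_sets])
  have m1: "obsU \<in> borel_measurable (simdg_law f0 M0 Lam Q)"
    unfolding measurable_cong_sets[OF law_sets[OF Q_prob Q_sets] refl] by simp
  show "integrable (simdg_law f0 M0 Lam Q) obsU"
    by (rule square_integrable_imp_integrable[OF m1 1])
qed

end

lemma col_inner: "(transpose (R::real^'k::finite^'p::finite) *v y) $ i = column i R \<bullet> y"
  by (simp add: matrix_vector_mult_def transpose_def column_def inner_vec_def mult.commute)

lemma RM0:
  fixes M0 :: "real^'r::finite^'p::finite" and R :: "real^'k::finite^'p"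
  assumes "(rank M0 < CARD('p) \<and> CARD('k) = CARD('p) - rank M0
                  \<and> (\<forall>i j. column i R \<bullet> column j R = (if i = j then 1 else 0))
                  \<and> span (columns R) = {x. transpose M0 *v x = 0})
              \<or> (rank M0 = CARD('p) \<and> CARD('k) = 1 \<and> R = 0)"
  shows "transpose R *v (M0 *v z) = 0"
  using assms
proof
  assume a: "rank M0 < CARD('p) \<and> CARD('k) = CARD('p) - rank M0
                  \<and> (\<forall>i j. column i R \<bullet> column j R = (if i = j then 1 else 0))
                  \<and> span (columns R) = {x. transpose M0 *v x = 0}"
  have "transpose M0 *v column i R = 0" for i
  proof -
    have "column i R \<in> span (columns R)" by (rule span_base) (auto simp: columns_def)
    then show ?thesis using a by simp
  qed
  then have "(transpose R *v (M0 *v z)) $ i = 0" for i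
    unfolding col_inner dot_lmul_matrix[symmetric] transpose_matrix_vector[symmetric] by simp
  then show ?thesis by (simp add: vec_eq_iff)
next
  assume "rank M0 = CARD('p) \<and> CARD('k) = 1 \<and> R = 0"
  then have "R = 0" by simp
  then show ?thesis by (simp add: vec_eq_iff vector_matrix_mult_def)
qed

lemma fst_borel[measurable]: "fst \<in> borel_measurable (borel :: ('a::second_countable_topology \<times> 'b::second_countable_topology) measure)"
  by (rule cont_borel) (intro continuous_intros)
lemma snd_borel[measurable]: "snd \<in> borel_measurable (borel :: ('a::second_countable_topology \<times> 'b::second_countable_topology) measure)"
  by (rule cont_borel) (intro continuous_intros)

context simdg_tr
begin

lemma Ptr_prob: "prob_space Ptr" by (rule law_prob[OF Qtr_prob Qtr_sets])
lemma Ptr_sets: "sets Ptr = sets borel" by (rule law_sets[OF Qtr_prob Qtr_sets])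
lemma Ptr_space: "space Ptr = UNIV" by (rule law_space[OF Qtr_prob Qtr_sets])

lemma law_meas_iff:
  assumes Q_prob: "prob_space Q" and Q_sets: "sets Q = sets borel"
  shows "measurable (simdg_law f0 M0 Lam Q) N = measurable borel N"
  by (rule measurable_cong_sets[OF law_sets[OF Q_prob Q_sets] refl])

lemma sfs_V: "sigma_finite_subalgebra Ptr (vimage_algebra (space Ptr) obsV borel)"
  by (rule sfs_vimage[OF Ptr_prob]) (simp add: law_meas_iff[OF Qtr_prob Qtr_sets])

lemma gam_int_Ptr: "integrable Ptr (\<lambda>w. \<gamma>0 (obsV w))"
proof -
  interpret sigma_finite_subalgebra Ptr "vimage_algebra (space Ptr) obsV borel" by (rule sfs_V)
  have i: "integrable Ptr (cond_exp_given Ptr obsV obsU)"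
    unfolding cond_exp_given_def by (rule real_cond_exp_int(1)[OF law_U2(2)[OF Qtr_prob Qtr_sets]])
  have m1: "(\<lambda>w. \<gamma>0 (obsV w)) \<in> borel_measurable Ptr" by (simp add: law_meas_iff[OF Qtr_prob Qtr_sets])
  have m2: "cond_exp_given Ptr obsV obsU \<in> borel_measurable Ptr"
    unfolding cond_exp_given_def by simp
  show ?thesis using integrable_cong_AE[OF m1 m2 \<gamma>0_def] i by simp
qed

lemma gam_int_Lam: "integrable Lam (\<lambda>y. \<gamma>0 (snd y))"
proof -
  have "integrable Ptr (\<lambda>w. \<gamma>0 (obsV w)) \<longleftrightarrow> integrable Lam (\<lambda>y. \<gamma>0 (snd y))"
    by (rule law_UV_integral(2)[OF Qtr_prob Qtr_sets]) (simp_all add: obsV_def)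
  then show ?thesis using gam_int_Ptr by simp
qed

lemma gam_int_law:
  assumes Q_prob: "prob_space Q" and Q_sets: "sets Q = sets borel"
  shows "integrable (simdg_law f0 M0 Lam Q) (\<lambda>w. \<gamma>0 (obsV w))"
proof -
  have "integrable (simdg_law f0 M0 Lam Q) (\<lambda>w. \<gamma>0 (obsV w)) \<longleftrightarrow> integrable Lam (\<lambda>y. \<gamma>0 (snd y))"
    by (rule law_UV_integral(2)[OF Q_prob Q_sets]) (simp_all add: obsV_def)
  then show ?thesis using gam_int_Lam by simp
qed

lemma key_Lam:
  assumes C: "C \<in> sets borel"
  shows "(\<integral>y. indicator C (snd y) * fst y \<partial>Lam) = (\<integral>y. indicator C (snd y) * \<gamma>0 (snd y) \<partial>Lam)"
proof -
  interpret sigma_finite_subalgebra Ptr "vimage_algebra (space Ptr) obsV borel" by (rule sfs_V)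
  note C[measurable]
  define A where "A = obsV -` C \<inter> space Ptr"
  have A: "A \<in> sets (vimage_algebra (space Ptr) obsV borel)" unfolding A_def by (rule in_vimage_algebra[OF C])
  have U1: "integrable Ptr obsU" by (rule law_U2(2)[OF Qtr_prob Qtr_sets])
  have rc[measurable]: "real_cond_exp Ptr (vimage_algebra (space Ptr) obsV borel) obsU \<in> borel_measurable borel"
  proof -
    have "real_cond_exp Ptr (vimage_algebra (space Ptr) obsV borel) obsU \<in> borel_measurable Ptr"
      by (rule measurable_from_subalg[OF subalg]) simp
    then show ?thesis unfolding law_meas_iff[OF Qtr_prob Qtr_sets] .
  qed
  have ind: "\<And>w. indicator A w = (indicator C (obsV w) :: real)"
    unfolding A_def Ptr_space by (simp add: indicator_def)
  have "(\<integral>w. indicator C (obsV w) * obsU w \<partial>Ptr) = (\<integral>x \<in> A. obsU x \<partial>Ptr)"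
    unfolding set_lebesgue_integral_def ind by simp
  also have "\<dots> = (\<integral>x \<in> A. real_cond_exp Ptr (vimage_algebra (space Ptr) obsV borel) obsU x \<partial>Ptr)"
    by (rule real_cond_exp_intA[OF U1 A])
  also have "\<dots> = (\<integral>w. indicator C (obsV w) * \<gamma>0 (obsV w) \<partial>Ptr)"
    unfolding set_lebesgue_integral_def ind real_scaleR_def
  proof (rule integral_cong_AE)
    note C[measurable]
    show "(\<lambda>x. indicator C (obsV x) * real_cond_exp Ptr (vimage_algebra (space Ptr) obsV borel) obsU x) \<in> borel_measurable Ptr"
      unfolding law_meas_iff[OF Qtr_prob Qtr_sets] by measurable
    show "(\<lambda>x. indicator C (obsV x) * \<gamma>0 (obsV x)) \<in> borel_measurable Ptr"
      unfolding law_meas_iff[OF Qtr_prob Qtr_sets] by measurable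
    show "AE x in Ptr. indicator C (obsV x) * real_cond_exp Ptr (vimage_algebra (space Ptr) obsV borel) obsU x = indicator C (obsV x) * \<gamma>0 (obsV x)"
      using \<gamma>0_def by eventually_elim (simp add: cond_exp_given_def)
  qed
  finally have E: "(\<integral>w. indicator C (obsV w) * obsU w \<partial>Ptr) = (\<integral>w. indicator C (obsV w) * \<gamma>0 (obsV w) \<partial>Ptr)" .
  have L: "(\<integral>w. indicator C (obsV w) * obsU w \<partial>Ptr) = (\<integral>y. indicator C (snd y) * fst y \<partial>Lam)"
    by (rule law_UV_integral(1)[OF Qtr_prob Qtr_sets]) (measurable, measurable, simp add: obsV_def obsU_def)
  have R: "(\<integral>w. indicator C (obsV w) * \<gamma>0 (obsV w) \<partial>Ptr) = (\<integral>y. indicator C (snd y) * \<gamma>0 (snd y) \<partial>Lam)"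
    by (rule law_UV_integral(1)[OF Qtr_prob Qtr_sets]) (measurable, measurable, simp add: obsV_def obsU_def)
  show ?thesis using E L R by simp
qed

lemma pp_LQ:
  assumes Q_prob: "prob_space Q"
  shows "pair_prob_space Lam Q"
  using Lam_prob Q_prob
  by (simp add: pair_prob_space_def pair_sigma_finite_def prob_space_imp_sigma_finite)

lemma law_to_LQ:
  assumes Q_prob: "prob_space Q" and Q_sets: "sets Q = sets borel"
    and [measurable]: "\<psi> \<in> borel_measurable borel" and eq: "\<And>u v z. \<psi> (mp ((u,v),z)) = G ((u,v),z)"
  shows "integral\<^sup>L (simdg_law f0 M0 Lam Q) \<psi> = integral\<^sup>L (Lam \<Otimes>\<^sub>M Q) G"
    "integrable (simdg_law f0 M0 Lam Q) (\<psi> :: _ \<Rightarrow> real) \<longleftrightarrow> integrable (Lam \<Otimes>\<^sub>M Q) G"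
proof -
  have e: "(\<lambda>x. \<psi> (mp x)) = G" using eq by (auto simp: fun_eq_iff)
  show "integral\<^sup>L (simdg_law f0 M0 Lam Q) \<psi> = integral\<^sup>L (Lam \<Otimes>\<^sub>M Q) G"
    unfolding law_eq integral_distr[OF mp_meas[OF Q_prob Q_sets] assms(3)] e ..
  show "integrable (simdg_law f0 M0 Lam Q) \<psi> \<longleftrightarrow> integrable (Lam \<Otimes>\<^sub>M Q) G"
    unfolding law_eq integrable_distr_eq[OF mp_meas[OF Q_prob Q_sets] assms(3)] e ..
qed

lemma key_Q:
  assumes Q_prob: "prob_space Q" and Q_sets: "sets Q = sets borel" and B[measurable]: "B \<in> sets borel"
  shows "(\<integral>w. indicator B (obsX w) * obsU w \<partial>simdg_law f0 M0 Lam Q)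
       = (\<integral>w. indicator B (obsX w) * \<gamma>0 (obsV w) \<partial>simdg_law f0 M0 Lam Q)"
proof -
  interpret pair_prob_space Lam Q by (rule pp_LQ[OF Q_prob])
  have LQm: "measurable (Lam \<Otimes>\<^sub>M Q) N = measurable borel N" for N
    by (rule measurable_cong_sets[OF LQ_sets[OF Q_prob Q_sets] refl])
  define F1 where "F1 = (\<lambda>(y::real \<times> (real^'p)) (z::real^'r). indicator B (M0 *v z + snd y) * fst y :: real)"
  define F2 where "F2 = (\<lambda>(y::real \<times> (real^'p)) (z::real^'r). indicator B (M0 *v z + snd y) * \<gamma>0 (snd y) :: real)"
  have m1: "case_prod F1 \<in> borel_measurable (Lam \<Otimes>\<^sub>M Q)"
    unfolding LQm F1_def case_prod_beta' by measurable
  have m2: "case_prod F2 \<in> borel_measurable (Lam \<Otimes>\<^sub>M Q)"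
    unfolding LQm F2_def case_prod_beta' by measurable
  have I1: "integral\<^sup>L (simdg_law f0 M0 Lam Q) (\<lambda>w. indicator B (obsX w) * obsU w) = integral\<^sup>L (Lam \<Otimes>\<^sub>M Q) (case_prod F1)"
    "integrable (simdg_law f0 M0 Lam Q) (\<lambda>w. indicator B (obsX w) * obsU w) \<longleftrightarrow> integrable (Lam \<Otimes>\<^sub>M Q) (case_prod F1)"
    by (rule law_to_LQ[OF Q_prob Q_sets], measurable, simp add: F1_def obsU_def obsX_def)+
  have I2: "integral\<^sup>L (simdg_law f0 M0 Lam Q) (\<lambda>w. indicator B (obsX w) * \<gamma>0 (obsV w)) = integral\<^sup>L (Lam \<Otimes>\<^sub>M Q) (case_prod F2)"
    "integrable (simdg_law f0 M0 Lam Q) (\<lambda>w. indicator B (obsX w) * \<gamma>0 (obsV w)) \<longleftrightarrow> integrable (Lam \<Otimes>\<^sub>M Q) (case_prod F2)"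
    by (rule law_to_LQ[OF Q_prob Q_sets], measurable, simp add: F2_def obsV_def obsX_def)+
  have U1: "integrable (simdg_law f0 M0 Lam Q) obsU" by (rule law_U2(2)[OF Q_prob Q_sets])
  have G1: "integrable (simdg_law f0 M0 Lam Q) (\<lambda>w. \<gamma>0 (obsV w))" by (rule gam_int_law[OF Q_prob Q_sets])
  have int1: "integrable (simdg_law f0 M0 Lam Q) (\<lambda>w. indicator B (obsX w) * obsU w)"
  proof (rule Bochner_Integration.integrable_bound[OF U1])
    show "(\<lambda>w. indicator B (obsX w) * obsU w) \<in> borel_measurable (simdg_law f0 M0 Lam Q)"
      unfolding law_meas_iff[OF Q_prob Q_sets] by measurable
    show "AE x in simdg_law f0 M0 Lam Q. norm (indicator B (obsX x) * obsU x) \<le> norm (obsU x)"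
      by (rule AE_I2) (simp add: indicator_def)
  qed
  have int2: "integrable (simdg_law f0 M0 Lam Q) (\<lambda>w. indicator B (obsX w) * \<gamma>0 (obsV w))"
  proof (rule Bochner_Integration.integrable_bound[OF G1])
    show "(\<lambda>w. indicator B (obsX w) * \<gamma>0 (obsV w)) \<in> borel_measurable (simdg_law f0 M0 Lam Q)"
      unfolding law_meas_iff[OF Q_prob Q_sets] by measurable
    show "AE x in simdg_law f0 M0 Lam Q. norm (indicator B (obsX x) * \<gamma>0 (obsV x)) \<le> norm (\<gamma>0 (obsV x))"
      by (rule AE_I2) (simp add: indicator_def)
  qed
  have J1: "integrable (Lam \<Otimes>\<^sub>M Q) (case_prod F1)" using int1 I1(2) by simp
  have J2: "integrable (Lam \<Otimes>\<^sub>M Q) (case_prod F2)" using int2 I2(2) by simp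
  have inner: "(\<integral>y. F1 y z \<partial>Lam) = (\<integral>y. F2 y z \<partial>Lam)" for z
  proof -
    define C where "C = (\<lambda>v. M0 *v z + v) -` B"
    have Cm: "C \<in> sets borel"
    proof -
      have "(\<lambda>v. M0 *v z + v) -` B \<inter> space borel \<in> sets (borel :: (real^'p) measure)"
        by (rule measurable_sets[OF _ B]) measurable
      then show ?thesis unfolding C_def by simp
    qed
    have "\<And>y. F1 y z = indicator C (snd y) * fst y" "\<And>y. F2 y z = indicator C (snd y) * \<gamma>0 (snd y)"
      unfolding F1_def F2_def C_def by (simp_all add: indicator_def)
    then show ?thesis using key_Lam[OF Cm] by simp
  qed
  have "integral\<^sup>L (Lam \<Otimes>\<^sub>M Q) (case_prod F1) = (\<integral>z. (\<integral>y. F1 y z \<partial>Lam) \<partial>Q)"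
    by (rule integral_snd[OF J1, symmetric])
  also have "\<dots> = (\<integral>z. (\<integral>y. F2 y z \<partial>Lam) \<partial>Q)" using inner by simp
  also have "\<dots> = integral\<^sup>L (Lam \<Otimes>\<^sub>M Q) (case_prod F2)"
    by (rule integral_snd[OF J2])
  finally show ?thesis using I1(1) I2(1) by simp
qed

end

context simdg_tr
begin

lemma main_ineq:
  fixes R :: "real^'k::finite^'p" and h :: "real^'k \<Rightarrow> real" and fstar f :: "real^'p \<Rightarrow> real"
    and Q :: "(real^'r) measure"
  assumes RM: "\<And>z. transpose R *v (M0 *v z) = 0"
    and h_meas[measurable]: "h \<in> borel_measurable borel"
    and h_def: "AE w in Ptr. h (transpose R *v obsX w)
                  = cond_exp_given Ptr (\<lambda>w. transpose R *v obsX w) (\<lambda>w. \<gamma>0 (obsV w)) w"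
    and fstar_def: "AE w in Ptr. fstar (obsX w) = f0 (obsX w) + h (transpose R *v obsX w)"
    and Q_prob: "prob_space Q" and Q_sets: "sets Q = sets borel"
    and f_meas[measurable]: "f \<in> borel_measurable borel"
    and f_inv: "distr Ptr borel (\<lambda>w. obsY w - f (obsX w)) = distr (simdg_law f0 M0 Lam Q) borel (\<lambda>w. obsY w - f (obsX w))"
  shows "risk Ptr fstar \<le> risk Ptr f + (\<integral>\<^sup>+ w. ennreal ((cond_exp_given (simdg_law f0 M0 Lam Q) (\<lambda>w. transpose R *v obsX w) (\<lambda>w. \<gamma>0 (obsV w)) w
                      - cond_exp_given (simdg_law f0 M0 Lam Q) obsX (\<lambda>w. \<gamma>0 (obsV w)) w)\<^sup>2) \<partial>(simdg_law f0 M0 Lam Q))"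
proof -
  let ?P = "simdg_law f0 M0 Lam Q"
  define T where "T = (\<lambda>w::('p,'r) obs. transpose R *v obsX w)"
  have Tb[measurable]: "T \<in> borel_measurable borel" unfolding T_def by measurable
  have Pprob: "prob_space ?P" by (rule law_prob[OF Q_prob Q_sets])
  have Pspace: "space ?P = UNIV" by (rule law_space[OF Q_prob Q_sets])
  have Pmeas: "\<And>N. measurable ?P N = measurable borel N" by (rule law_meas_iff[OF Q_prob Q_sets])
  have Tmeas: "\<And>N. measurable Ptr N = measurable borel N" by (rule law_meas_iff[OF Qtr_prob Qtr_sets])
  let ?FX = "vimage_algebra (space ?P) obsX borel"
  let ?FR = "vimage_algebra (space ?P) T borel"
  let ?FRt = "vimage_algebra (space Ptr) T borel"
  have sX: "sigma_finite_subalgebra ?P ?FX" by (rule sfs_vimage[OF Pprob]) (simp add: Pmeas)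
  have sR: "sigma_finite_subalgebra ?P ?FR" by (rule sfs_vimage[OF Pprob]) (simp add: Pmeas)
  have sRt: "sigma_finite_subalgebra Ptr ?FRt" by (rule sfs_vimage[OF Ptr_prob]) (simp add: Tmeas)
  have XF: "obsX \<in> measurable ?FX borel" by (rule measurable_vimage_algebra1) simp
  have TF: "T \<in> measurable ?FR borel" by (rule measurable_vimage_algebra1) simp
  have TFt: "T \<in> measurable ?FRt borel" by (rule measurable_vimage_algebra1) simp
  define k where "k = (\<lambda>w. h (T w))"
  have km[measurable]: "k \<in> borel_measurable borel" unfolding k_def by measurable
  have kX: "k \<in> borel_measurable ?FX"
  proof -
    have "(\<lambda>x. h (transpose R *v x)) \<in> borel_measurable borel" by measurable
    from measurable_compose[OF XF this] show ?thesis unfolding k_def T_def .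
  qed
  have kR: "k \<in> borel_measurable ?FR" unfolding k_def by (rule measurable_compose[OF TF h_meas])
  define gX where "gX = (\<lambda>w::('p,'r) obs. f (obsX w) - f0 (obsX w))"
  have gXF: "gX \<in> borel_measurable ?FX"
  proof -
    have "(\<lambda>x. f x - f0 x) \<in> borel_measurable borel" by measurable
    from measurable_compose[OF XF this] show ?thesis unfolding gX_def .
  qed
  have U2: "integrable ?P (\<lambda>w. (obsU w)\<^sup>2)" by (rule law_U2(1)[OF Q_prob Q_sets])
  have U1: "integrable ?P obsU" by (rule law_U2(2)[OF Q_prob Q_sets])
  have Um: "obsU \<in> borel_measurable ?P" by (simp add: Pmeas)
  define c where "c = real_cond_exp ?P ?FX obsU"
  have pyk: "(\<integral>\<^sup>+x. ennreal ((obsU x - k x)\<^sup>2) \<partial>?P) =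
     (\<integral>\<^sup>+x. ennreal ((obsU x - c x)\<^sup>2) \<partial>?P) + (\<integral>\<^sup>+x. ennreal ((c x - k x)\<^sup>2) \<partial>?P)"
    unfolding c_def by (rule cond_pyth[OF Pprob sX Um U2 kX])
  have pyg: "(\<integral>\<^sup>+x. ennreal ((obsU x - gX x)\<^sup>2) \<partial>?P) =
     (\<integral>\<^sup>+x. ennreal ((obsU x - c x)\<^sup>2) \<partial>?P) + (\<integral>\<^sup>+x. ennreal ((c x - gX x)\<^sup>2) \<partial>?P)"
    unfolding c_def by (rule cond_pyth[OF Pprob sX Um U2 gXF])
  have riskP: "risk ?P f = (\<integral>\<^sup>+x. ennreal ((obsU x - gX x)\<^sup>2) \<partial>?P)"
    unfolding risk_def
    by (rule nn_integral_cong_AE) (use law_AE[OF Q_prob Q_sets] in \<open>eventually_elim, simp add: gX_def algebra_simps\<close>)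
  have riskd: "risk M f = (\<integral>\<^sup>+t. ennreal (t\<^sup>2) \<partial>distr M borel (\<lambda>w. obsY w - f (obsX w)))"
    if "sets M = sets borel" for M
  proof -
    have m: "(\<lambda>w. obsY w - f (obsX w)) \<in> measurable M borel"
      unfolding measurable_cong_sets[OF that refl] by measurable
    show ?thesis unfolding risk_def
      by (rule nn_integral_distr[OF m, symmetric]) (simp add: measurable_distr_eq1)
  qed
  have riskeq: "risk Ptr f = risk ?P f"
    using riskd[OF Ptr_sets] riskd[OF law_sets[OF Q_prob Q_sets]] f_inv by simp
  have riskstar: "risk Ptr fstar = (\<integral>\<^sup>+x. ennreal ((obsU x - k x)\<^sup>2) \<partial>Ptr)"
    unfolding risk_def
    by (rule nn_integral_cong_AE) (use law_AE[OF Qtr_prob Qtr_sets] fstar_def in \<open>eventually_elim, simp add: k_def T_def\<close>)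
  have Teq: "T (mp ((u,v),z)) = transpose R *v v" for u v z
  proof -
    have "transpose R *v (M0 *v z + v) = transpose R *v v"
      by (simp only: matrix_vector_right_distrib RM add_0_left)
    then show ?thesis unfolding T_def obsX_def mp_simp fst_conv snd_conv .
  qed
  have transfer: "(\<integral>\<^sup>+x. ennreal ((obsU x - k x)\<^sup>2) \<partial>Ptr) = (\<integral>\<^sup>+x. ennreal ((obsU x - k x)\<^sup>2) \<partial>?P)"
  proof -
    have "(\<integral>\<^sup>+x. ennreal ((obsU x - k x)\<^sup>2) \<partial>simdg_law f0 M0 Lam Q') = (\<integral>\<^sup>+y. ennreal ((fst y - h (transpose R *v snd y))\<^sup>2) \<partial>Lam)"
      if "prob_space Q'" "sets Q' = sets borel" for Q'
      by (rule law_UV_nn_integral[OF that]) (measurable, measurable, simp add: k_def Teq[unfolded mp_simp] obsU_def)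
    from this[OF Qtr_prob Qtr_sets] this[OF Q_prob Q_sets] show ?thesis by simp
  qed
  have G1: "integrable ?P (\<lambda>w. \<gamma>0 (obsV w))" by (rule gam_int_law[OF Q_prob Q_sets])
  have cX: "AE w in ?P. c w = cond_exp_given ?P obsX (\<lambda>w. \<gamma>0 (obsV w)) w"
  proof -
    interpret sX: sigma_finite_subalgebra ?P ?FX by (rule sX)
    have "AE w in ?P. real_cond_exp ?P ?FX obsU w = real_cond_exp ?P ?FX (\<lambda>w. \<gamma>0 (obsV w)) w"
    proof (rule sX.real_cond_exp_charact)
      fix A assume A: "A \<in> sets ?FX"
      then obtain B where B: "B \<in> sets borel" and AB: "A = obsX -` B \<inter> space ?P"
        using sets_vimage_algebra2[of obsX "space ?P" borel] by auto
      have ind: "\<And>w. indicator A w = (indicator B (obsX w) :: real)"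
        unfolding AB Pspace by (simp add: indicator_def)
      have "(\<integral>x\<in>A. obsU x \<partial>?P) = (\<integral>w. indicator B (obsX w) * obsU w \<partial>?P)"
        unfolding set_lebesgue_integral_def ind by simp
      also have "\<dots> = (\<integral>w. indicator B (obsX w) * \<gamma>0 (obsV w) \<partial>?P)"
        by (rule key_Q[OF Q_prob Q_sets B])
      also have "\<dots> = (\<integral>x\<in>A. \<gamma>0 (obsV x) \<partial>?P)"
        unfolding set_lebesgue_integral_def ind by simp
      also have "\<dots> = (\<integral>x\<in>A. real_cond_exp ?P ?FX (\<lambda>w. \<gamma>0 (obsV w)) x \<partial>?P)"
        by (rule sX.real_cond_exp_intA[OF G1 A])
      finally show "(\<integral>x\<in>A. obsU x \<partial>?P) = (\<integral>x\<in>A. real_cond_exp ?P ?FX (\<lambda>w. \<gamma>0 (obsV w)) x \<partial>?P)" .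
    next
      show "integrable ?P obsU" by (rule U1)
      show "integrable ?P (real_cond_exp ?P ?FX (\<lambda>w. \<gamma>0 (obsV w)))" by (rule sX.real_cond_exp_int(1)[OF G1])
      show "real_cond_exp ?P ?FX (\<lambda>w. \<gamma>0 (obsV w)) \<in> borel_measurable ?FX" by simp
    qed
    then show ?thesis unfolding c_def cond_exp_given_def .
  qed
  have Ki1: "(\<integral>w. indicator B (T w) * \<gamma>0 (obsV w) \<partial>simdg_law f0 M0 Lam Q') = (\<integral>y. indicator B (transpose R *v snd y) * \<gamma>0 (snd y) \<partial>Lam)"
    if "prob_space Q'" "sets Q' = sets borel" "B \<in> sets borel" for Q' B
  proof -
    note that(3)[measurable]
    show ?thesis
      by (rule law_UV_integral(1)[OF that(1,2)], measurable, measurable, simp add: Teq[unfolded mp_simp] obsV_def)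
  qed
  have Ki2: "(\<integral>w. indicator B (T w) * k w \<partial>simdg_law f0 M0 Lam Q') = (\<integral>y. indicator B (transpose R *v snd y) * h (transpose R *v snd y) \<partial>Lam)"
    if "prob_space Q'" "sets Q' = sets borel" "B \<in> sets borel" for Q' B
  proof -
    note that(3)[measurable]
    show ?thesis
      by (rule law_UV_integral(1)[OF that(1,2)], measurable, measurable, simp add: k_def Teq[unfolded mp_simp])
  qed
  have kint_t: "integrable Ptr k"
  proof -
    interpret sRt: sigma_finite_subalgebra Ptr ?FRt by (rule sRt)
    have GP: "integrable Ptr (\<lambda>w. \<gamma>0 (obsV w))" by (rule gam_int_Ptr)
    have rm: "real_cond_exp Ptr ?FRt (\<lambda>w. \<gamma>0 (obsV w)) \<in> borel_measurable Ptr"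
      by (rule measurable_from_subalg[OF sRt.subalg]) simp
    have "AE w in Ptr. k w = real_cond_exp Ptr ?FRt (\<lambda>w. \<gamma>0 (obsV w)) w"
      using h_def unfolding k_def T_def cond_exp_given_def .
    moreover have "k \<in> borel_measurable Ptr" unfolding Tmeas by (rule km)
    ultimately have "integrable Ptr k \<longleftrightarrow> integrable Ptr (real_cond_exp Ptr ?FRt (\<lambda>w. \<gamma>0 (obsV w)))"
      using integrable_cong_AE[OF _ rm, of k] by blast
    then show ?thesis using sRt.real_cond_exp_int(1)[OF GP] by simp
  qed
  have kint: "integrable ?P k"
  proof -
    have "integrable (simdg_law f0 M0 Lam Q') k \<longleftrightarrow> integrable Lam (\<lambda>y. h (transpose R *v snd y))"
      if "prob_space Q'" "sets Q' = sets borel" for Q'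
      by (rule law_UV_integral(2)[OF that], measurable, measurable, simp add: k_def Teq[unfolded mp_simp])
    from this[OF Qtr_prob Qtr_sets] this[OF Q_prob Q_sets] kint_t show ?thesis by simp
  qed
  have cR: "AE w in ?P. k w = cond_exp_given ?P T (\<lambda>w. \<gamma>0 (obsV w)) w"
  proof -
    interpret sR: sigma_finite_subalgebra ?P ?FR by (rule sR)
    interpret sRt: sigma_finite_subalgebra Ptr ?FRt by (rule sRt)
    have GP: "integrable Ptr (\<lambda>w. \<gamma>0 (obsV w))" by (rule gam_int_Ptr)
    have hd: "AE w in Ptr. k w = real_cond_exp Ptr ?FRt (\<lambda>w. \<gamma>0 (obsV w)) w"
      using h_def unfolding k_def T_def cond_exp_given_def .
    have rmt[measurable]: "real_cond_exp Ptr ?FRt (\<lambda>w. \<gamma>0 (obsV w)) \<in> borel_measurable borel"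
    proof -
      have "real_cond_exp Ptr ?FRt (\<lambda>w. \<gamma>0 (obsV w)) \<in> borel_measurable Ptr"
        by (rule measurable_from_subalg[OF sRt.subalg]) simp
      then show ?thesis unfolding Tmeas .
    qed
    have "AE w in ?P. real_cond_exp ?P ?FR (\<lambda>w. \<gamma>0 (obsV w)) w = k w"
    proof (rule sR.real_cond_exp_charact)
      fix A assume A: "A \<in> sets ?FR"
      then obtain B where B[measurable]: "B \<in> sets borel" and AB: "A = T -` B \<inter> space ?P"
        using sets_vimage_algebra2[of T "space ?P" borel] by auto
      have ind: "\<And>w. indicator A w = (indicator B (T w) :: real)"
        unfolding AB Pspace by (simp add: indicator_def)
      define At where "At = T -` B \<inter> space Ptr"
      have At: "At \<in> sets ?FRt" unfolding At_def by (rule in_vimage_algebra[OF B])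
      have indt: "\<And>w. indicator At w = (indicator B (T w) :: real)"
        unfolding At_def Ptr_space by (simp add: indicator_def)
      have "(\<integral>x\<in>A. \<gamma>0 (obsV x) \<partial>?P) = (\<integral>w. indicator B (T w) * \<gamma>0 (obsV w) \<partial>?P)"
        unfolding set_lebesgue_integral_def ind by simp
      also have "\<dots> = (\<integral>w. indicator B (T w) * \<gamma>0 (obsV w) \<partial>Ptr)"
        using Ki1[OF Q_prob Q_sets B] Ki1[OF Qtr_prob Qtr_sets B] by simp
      also have "\<dots> = (\<integral>x\<in>At. \<gamma>0 (obsV x) \<partial>Ptr)"
        unfolding set_lebesgue_integral_def indt by simp
      also have "\<dots> = (\<integral>x\<in>At. real_cond_exp Ptr ?FRt (\<lambda>w. \<gamma>0 (obsV w)) x \<partial>Ptr)"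
        by (rule sRt.real_cond_exp_intA[OF GP At])
      also have "\<dots> = (\<integral>w. indicator B (T w) * k w \<partial>Ptr)"
        unfolding set_lebesgue_integral_def indt real_scaleR_def
      proof (rule integral_cong_AE)
        show "(\<lambda>x. indicator B (T x) * real_cond_exp Ptr ?FRt (\<lambda>w. \<gamma>0 (obsV w)) x) \<in> borel_measurable Ptr"
          unfolding Tmeas by measurable
        show "(\<lambda>x. indicator B (T x) * k x) \<in> borel_measurable Ptr"
          unfolding Tmeas by measurable
        show "AE x in Ptr. indicator B (T x) * real_cond_exp Ptr ?FRt (\<lambda>w. \<gamma>0 (obsV w)) x = indicator B (T x) * k x"
          using hd by eventually_elim simp
      qed
      also have "\<dots> = (\<integral>w. indicator B (T w) * k w \<partial>?P)"
        using Ki2[OF Q_prob Q_sets B] Ki2[OF Qtr_prob Qtr_sets B] by simp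
      also have "\<dots> = (\<integral>x\<in>A. k x \<partial>?P)"
        unfolding set_lebesgue_integral_def ind by simp
      finally show "(\<integral>x\<in>A. \<gamma>0 (obsV x) \<partial>?P) = (\<integral>x\<in>A. k x \<partial>?P)" .
    next
      show "integrable ?P (\<lambda>w. \<gamma>0 (obsV w))" by (rule G1)
      show "integrable ?P k" by (rule kint)
      show "k \<in> borel_measurable ?FR" by (rule kR)
    qed
    then show ?thesis unfolding cond_exp_given_def by (rule AE_mp) (rule AE_I2, simp)
  qed
  have eps: "(\<integral>\<^sup>+x. ennreal ((c x - k x)\<^sup>2) \<partial>?P) = (\<integral>\<^sup>+ w. ennreal ((cond_exp_given ?P T (\<lambda>w. \<gamma>0 (obsV w)) w
                      - cond_exp_given ?P obsX (\<lambda>w. \<gamma>0 (obsV w)) w)\<^sup>2) \<partial>?P)"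
    by (rule nn_integral_cong_AE) (use cX cR in \<open>eventually_elim, simp add: power2_commute\<close>)
  have "risk Ptr fstar = (\<integral>\<^sup>+x. ennreal ((obsU x - c x)\<^sup>2) \<partial>?P) + (\<integral>\<^sup>+x. ennreal ((c x - k x)\<^sup>2) \<partial>?P)"
    using riskstar transfer pyk by simp
  also have "\<dots> \<le> risk Ptr f + (\<integral>\<^sup>+x. ennreal ((c x - k x)\<^sup>2) \<partial>?P)"
  proof (rule add_right_mono)
    show "(\<integral>\<^sup>+x. ennreal ((obsU x - c x)\<^sup>2) \<partial>?P) \<le> risk Ptr f"
      unfolding riskeq riskP pyg by simp
  qed
  finally show ?thesis unfolding eps T_def .
qed

end

theorem corollary1:
  fixes f0 :: "real^'p::finite \<Rightarrow> real"
    and M0 :: "real^'r::finite^'p"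
    and Lam :: "(real \<times> (real^'p)) measure"
    and Q0 :: "(real^'r) measure set"
    and Qtr :: "(real^'r) measure"
    and R :: "real^'k::finite^'p"
    and F :: "(real^'p \<Rightarrow> real) set"
    and \<gamma>0 :: "real^'p \<Rightarrow> real"
    and h :: "real^'k \<Rightarrow> real"
    and fstar :: "real^'p \<Rightarrow> real"
  defines "P0 \<equiv> simdg_law f0 M0 Lam ` Q0"
    and "Ptr \<equiv> simdg_law f0 M0 Lam Qtr"
    and "I0 \<equiv> {f\<in>F. invariant_fun (simdg_law f0 M0 Lam Qtr) (simdg_law f0 M0 Lam ` Q0) f}"
  assumes f0_meas: "f0 \<in> borel_measurable borel"
    and Lam_prob: "prob_space Lam" and Lam_sets: "sets Lam = sets borel"
    and Lam_int: "integrable Lam (\<lambda>w. w)" and Lam_mean: "(\<integral>w. w \<partial>Lam) = 0"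
    and Lam_sq: "integrable Lam (\<lambda>w. (norm w)\<^sup>2)"
    and Q0_prob: "\<And>Q. Q \<in> Q0 \<Longrightarrow> prob_space Q \<and> sets Q = sets borel"
    and f0_sq: "(SUP P\<in>P0. \<integral>\<^sup>+ w. ennreal ((f0 (obsX w))\<^sup>2) \<partial>P) < \<infinity>"
    and Qtr_in: "Qtr \<in> Q0"
    and Qtr_int: "integrable Qtr (\<lambda>z. z)" and Qtr_mean: "(\<integral>z. z \<partial>Qtr) = 0"
    and Qtr_int2: "\<And>i j. integrable Qtr (\<lambda>z. z $ i * z $ j)"
    and Qtr_pd: "\<And>a. a \<noteq> 0 \<Longrightarrow>
        a \<bullet> ((\<chi> i j. \<integral>z. z $ i * z $ j \<partial>Qtr) *v a) > 0"
    and R_def: "(rank M0 < CARD('p) \<and> CARD('k) = CARD('p) - rank M0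
                  \<and> (\<forall>i j. column i R \<bullet> column j R = (if i = j then 1 else 0))
                  \<and> span (columns R) = {x. transpose M0 *v x = 0})
              \<or> (rank M0 = CARD('p) \<and> CARD('k) = 1 \<and> R = 0)"
    and \<gamma>0_meas: "\<gamma>0 \<in> borel_measurable borel"
    and \<gamma>0_def: "AE w in Ptr. \<gamma>0 (obsV w) = cond_exp_given Ptr obsV obsU w"
    and F_meas: "F \<subseteq> borel_measurable borel"
    and h_meas: "h \<in> borel_measurable borel"
    and h_def: "AE w in Ptr. h (transpose R *v obsX w)
                  = cond_exp_given Ptr (\<lambda>w. transpose R *v obsX w) (\<lambda>w. \<gamma>0 (obsV w)) w"
    and fstar_def: "AE w in Ptr. fstar (obsX w) = f0 (obsX w) + h (transpose R *v obsX w)"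
    and fstar_I0: "fstar \<in> I0"
    and cond_i: "\<And>f g P. f \<in> F \<Longrightarrow> g \<in> F \<Longrightarrow> P \<in> P0 \<Longrightarrow>
        (AE w in Ptr. f (obsX w) = g (obsX w)) \<Longrightarrow> (AE w in P. f (obsX w) = g (obsX w))"
    and cond_ii: "(INF P\<in>P0. \<integral>\<^sup>+ w. ennreal ((cond_exp_given P (\<lambda>w. transpose R *v obsX w) (\<lambda>w. \<gamma>0 (obsV w)) w
                      - cond_exp_given P obsX (\<lambda>w. \<gamma>0 (obsV w)) w)\<^sup>2) \<partial>P) = 0"
  shows "risk Ptr fstar = (INF f\<in>I0. risk Ptr f)"
proof -
  have Qp: "prob_space Q" "sets Q = sets borel" if "Q \<in> Q0" for Q using Q0_prob[OF that] by auto
  have loc: "simdg_tr f0 M0 Lam Qtr \<gamma>0"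
    unfolding simdg_tr_def simdg_tr_axioms_def simdg_def
    using f0_meas Lam_prob Lam_sets Qp[OF Qtr_in] Lam_sq \<gamma>0_meas \<gamma>0_def unfolding Ptr_def by auto
  have RM: "\<And>z. transpose R *v (M0 *v z) = 0" by (rule RM0[OF R_def])
  define eps where "eps = (\<lambda>P::('p,'r) obs measure. \<integral>\<^sup>+ w. ennreal ((cond_exp_given P (\<lambda>w. transpose R *v obsX w) (\<lambda>w. \<gamma>0 (obsV w)) w
                      - cond_exp_given P obsX (\<lambda>w. \<gamma>0 (obsV w)) w)\<^sup>2) \<partial>P)"
  have key: "risk Ptr fstar \<le> risk Ptr f + eps P" if f: "f \<in> I0" and P: "P \<in> P0" for f P
  proof -
    obtain Q where Q: "Q \<in> Q0" and PQ: "P = simdg_law f0 M0 Lam Q" using P unfolding P0_def by auto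
    have fF: "f \<in> F" and finv: "invariant_fun (simdg_law f0 M0 Lam Qtr) (simdg_law f0 M0 Lam ` Q0) f"
      using f unfolding I0_def by auto
    have fm: "f \<in> borel_measurable borel" using fF F_meas by auto
    have d: "distr (simdg_law f0 M0 Lam Qtr) borel (\<lambda>w. obsY w - f (obsX w)) = distr (simdg_law f0 M0 Lam Q) borel (\<lambda>w. obsY w - f (obsX w))"
      using finv Q unfolding invariant_fun_def by auto
    show ?thesis
      using simdg_tr.main_ineq[OF loc RM h_meas h_def[unfolded Ptr_def] fstar_def[unfolded Ptr_def] Qp[OF Q] fm d]
      unfolding eps_def PQ Ptr_def by simp
  qed
  have le: "risk Ptr fstar \<le> risk Ptr f" if f: "f \<in> I0" for f
  proof (rule ennreal_le_epsilon)
    fix e :: real assume "0 < e"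
    then have "(INF P\<in>P0. eps P) < ennreal e" using cond_ii unfolding eps_def by simp
    then obtain P where P: "P \<in> P0" and Pe: "eps P < ennreal e" by (auto simp: INF_less_iff)
    have "risk Ptr fstar \<le> risk Ptr f + eps P" by (rule key[OF f P])
    also have "\<dots> \<le> risk Ptr f + ennreal e" using Pe by (intro add_left_mono) simp
    finally show "risk Ptr fstar \<le> risk Ptr f + ennreal e" .
  qed
  show ?thesis
  proof (rule antisym)
    show "risk Ptr fstar \<le> (INF f\<in>I0. risk Ptr f)" by (rule INF_greatest) (rule le)
    show "(INF f\<in>I0. risk Ptr f) \<le> risk Ptr fstar" by (rule INF_lower[OF fstar_I0])
  qed
qed

end
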